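(* Under the assumptions below, let $\overline{y}\in[H_Y,Y]_s$ for some $s\in[0,1]$, let $\varrho=h^{2\alpha}$, let $y_{\varrho h}\in Y_h$ be the Galerkin solution, let $\widetilde{u}_{\varrho h}\in U_h$ be the unique solution of $\langle\widetilde{u}_{\varrho h},x_h\rangle_{X^*,X}=\langle By_{\varrho h},x_h\rangle_{X^*,X}$ for all $x_h\in X_h$, and let $\widetilde{y}_\varrho:=B^{-1}\widetilde{u}_{\varrho h}$. Then $$\|\widetilde{y}_\varrho-\overline{y}\|_{H_Y}\le c\,h^{\alpha s}\|\overline{y}\|_{[H_Y,Y]_s}$$ with a constant $c$ independent of $h$ and $\overline{y}$.
   Context: Abstract setting: Let $X\subset H_X\subset X^*$ and $Y\subset H_Y\subset Y^*$ be Gelfand triples of real Hilbert spaces, where the duality pairings $\langle\cdot,\cdot\rangle_{X^*,X}$ and $\langle\cdot,\cdot\rangle_{Y^*,Y}$ extend the inner products of $H_X$, $H_Y$. Let $B:Y\to X^*$ be a bounded linear isomorphism with adjoint $B^*:X\to Y^*$, $\langle By,x\rangle_{X^*,X}=\langle y,B^*x\rangle_{Y,Y^*}$. Let $D:Y\to Y^*$ be bounded, linear, self-adjoint and elliptic, $\|y\|_D:=\langle Dy,y\rangle_{Y^*,Y}^{1/2}$ (an equivalent norm on $Y$). Given $\overline{y}\in H_Y$ and $\varrho>0$, $y_\varrho\in Y$ is the unique solution of $\langle y_\varrho,y\rangle_{H_Y}+\varrho\langle Dy_\varrho,y\rangle_{Y^*,Y}=\langle\overline{y},y\rangle_{H_Y}$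 for all $y\in Y$. Discretization: for each $h\in(0,h_0]$, $Y_h\subset Y$ is finite-dimensional and there are maps $P_h:Y\to Y_h$, $\alpha>0$ and $c_1,c_2>0$ independent of $h$ with $\|y-P_hy\|_{H_Y}\le c_1h^\alpha\|y\|_D$ and $\|y-P_hy\|_D\le c_2\|y\|_D$ for all $y\in Y$; $y_{\varrho h}\in Y_h$ satisfies $\langle y_{\varrho h},y_h\rangle_{H_Y}+\varrho\langle Dy_{\varrho h},y_h\rangle_{Y^*,Y}=\langle\overline{y},y_h\rangle_{H_Y}$ for all $y_h\in Y_h$. Further, $U_h\subset X^*$ and $X_h\subset X$ are finite-dimensional subspaces with $\dim U_h=\dim X_h$, satisfying the discrete inf-sup condition $c_S\|u_h\|_{X^*}\le\sup_{0\ne x_h\in X_h}\langle u_h,x_h\rangle_{X^*,X}/\|x_h\|_X$ for all $u_h\in U_h$ with $c_S>0$ independent of $h$, and there are maps $\Pi_h:X\to X_h$ with $\|x-\Pi_hx\|_X\le c\,h^\alpha\|B^*x\|_{H_Y}$ for all $x\in X$ with $B^*x\in H_Y$, $c$ independent of $h$. $[H_Y,Y]_s$, $s\in[0,1]$, denotes the interpolation space between $H_Y$ and $Y$ (with $Y$ normed by $\|\cdot\|_D$) obtained by an exact interpolation method of exponent $s$ (e.g. the real $K$-method), with $[H_Y,Y]_0=H_Y$ and $[H_Y,Y]_1=Y$. *)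

theory Defs
  imports "HOL-Analysis.Analysis"
begin

text \<open>Energy norm induced by the bilinear form d(y,z) = <D y, z>.\<close>
definition Dnorm :: "('y \<Rightarrow> 'y \<Rightarrow> real) \<Rightarrow> 'y \<Rightarrow> real" where
  "Dnorm d y = sqrt (d y y)"

definition Kfun :: "('y::real_normed_vector) set \<Rightarrow> ('y \<Rightarrow> real) \<Rightarrow> real \<Rightarrow> 'y \<Rightarrow> real" where
  "Kfun Y nY t y = Inf {norm y0 + t * nY y1 | y0 y1. y1 \<in> Y \<and> y = y0 + y1}"

definition interp_integral :: "real \<Rightarrow> ('y::real_normed_vector) set \<Rightarrow> ('y \<Rightarrow> real) \<Rightarrow> 'y \<Rightarrow> ennreal" where
  "interp_integral s Y nY y =
     (\<integral>\<^sup>+ t \<in> {0<..}. ennreal ((t powr (- s) * Kfun Y nY t y)\<^sup>2 / t) \<partial>lborel)"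

text \<open>Interpolation space [H,Y]_s, with the conventions [H,Y]_0 = H, [H,Y]_1 = Y.\<close>
definition interp_space :: "real \<Rightarrow> ('y::real_normed_vector) set \<Rightarrow> ('y \<Rightarrow> real) \<Rightarrow> 'y set" where
  "interp_space s Y nY =
     (if s = 0 then UNIV else if s = 1 then Y else {y. interp_integral s Y nY y < \<infinity>})"

definition interp_norm :: "real \<Rightarrow> ('y::real_normed_vector) set \<Rightarrow> ('y \<Rightarrow> real) \<Rightarrow> 'y \<Rightarrow> real" where
  "interp_norm s Y nY y =
     (if s = 0 then norm y else if s = 1 then nY y
      else sqrt (enn2real (interp_integral s Y nY y)))"

end

theory Submission
  imports Defs
begin

lemma riesz_rep:
  fixes f :: "'x::{real_inner,complete_space} \<Rightarrow> real"
  assumes bl: "bounded_linear f"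
  shows "\<exists>z. \<forall>x. f x = inner z x"
proof -
  interpret f: bounded_linear f by (rule bl)
  obtain K where K: "K > 0" "\<And>x. norm (f x) \<le> norm x * K" using f.pos_bounded by blast
  define J where "J x = (norm x)\<^sup>2 - 2 * f x" for x
  have Jlow: "J x \<ge> - K\<^sup>2" for x
  proof -
    have "f x \<le> norm x * K" using K(2)[of x] by auto
    moreover have "0 \<le> (norm x - K)\<^sup>2" by simp
    ultimately show ?thesis unfolding J_def by (simp add: power2_eq_square algebra_simps)
  qed
  define m where "m = Inf (range J)"
  have bdd: "bdd_below (range J)" using Jlow by (intro bdd_belowI[where m="- K\<^sup>2"]) auto
  have mle: "m \<le> J x" for x unfolding m_def using bdd by (simp add: cINF_lower)
  have "\<exists>x. J x < m + 1 / real (Suc n)" for n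
  proof (rule ccontr)
    assume "\<not> ?thesis"
    hence "\<forall>x. m + 1 / real (Suc n) \<le> J x" by (auto simp: not_less)
    hence "m + 1 / real (Suc n) \<le> m" unfolding m_def by (intro cINF_greatest) auto
    thus False by simp
  qed
  then obtain xs where xs: "\<And>n. J (xs n) < m + 1 / real (Suc n)" by metis
  have par: "(norm (a - b))\<^sup>2 = 2 * J a + 2 * J b - 4 * J ((1/2) *\<^sub>R (a + b))" for a b
  proof -
    have "f ((1/2) *\<^sub>R (a + b)) = (f a + f b) / 2" by (simp add: f.scaleR f.add)
    moreover have "(norm ((1/2) *\<^sub>R (a + b)))\<^sup>2 = (inner (a+b) (a+b)) / 4"
      by (simp add: power_divide power2_norm_eq_inner)
    ultimately have h1: "J ((1/2) *\<^sub>R (a + b)) = inner (a+b) (a+b) / 4 - (f a + f b)"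
      unfolding J_def by simp
    have h2: "J a = inner a a - 2 * f a" "J b = inner b b - 2 * f b"
      unfolding J_def by (simp_all add: power2_norm_eq_inner)
    have h3: "(norm (a - b))\<^sup>2 = inner a a - 2 * inner a b + inner b b"
      by (simp add: power2_norm_eq_inner inner_diff inner_commute)
    have h4: "inner (a+b) (a+b) = inner a a + 2 * inner a b + inner b b"
      by (simp add: inner_add inner_commute)
    show ?thesis using h1 h2 h3 h4 by linarith
  qed
  have cau: "Cauchy xs"
  proof (rule metric_CauchyI)
    fix e :: real assume "e > 0"
    have "e\<^sup>2 / 4 > 0" using \<open>e>0\<close> by simp
    then obtain N where N: "1 / real (Suc N) < e\<^sup>2 / 4"
      using reals_Archimedean by (metis inverse_eq_divide)
    show "\<exists>M. \<forall>m\<ge>M. \<forall>n\<ge>M. dist (xs m) (xs n) < e"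
    proof (intro exI allI impI)
      fix p q assume pq: "N \<le> p" "N \<le> q"
      have ip: "1 / real (Suc p) \<le> 1 / real (Suc N)" using pq by (simp add: frac_le)
      have iq: "1 / real (Suc q) \<le> 1 / real (Suc N)" using pq by (simp add: frac_le)
      have "(norm (xs p - xs q))\<^sup>2 = 2 * J (xs p) + 2 * J (xs q) - 4 * J ((1/2) *\<^sub>R (xs p + xs q))"
        by (rule par)
      also have "\<dots> < 2 * (m + 1 / real (Suc p)) + 2 * (m + 1 / real (Suc q)) - 4 * m"
      proof -
        have gen: "\<And>X Y Z A B::real. X < m + A \<Longrightarrow> Y < m + B \<Longrightarrow> m \<le> Z \<Longrightarrow> 2*X + 2*Y - 4*Z < 2*(m+A) + 2*(m+B) - 4*m"
          by (simp add: algebra_simps)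
        show ?thesis by (rule gen[OF xs[of p] xs[of q] mle[of "(1/2) *\<^sub>R (xs p + xs q)"]])
      qed
      also have "\<dots> \<le> e\<^sup>2"
      proof -
        have gen: "\<And>A B C E::real. A \<le> C \<Longrightarrow> B \<le> C \<Longrightarrow> C < E/4 \<Longrightarrow> 2*(m+A)+2*(m+B)-4*m \<le> E" by (simp add: algebra_simps)
        show ?thesis by (rule gen[OF ip iq N])
      qed
      finally have "(norm (xs p - xs q))\<^sup>2 < e\<^sup>2" .
      thus "dist (xs p) (xs q) < e" using \<open>e>0\<close> by (simp add: dist_norm power_less_imp_less_base)
    qed
  qed
  then obtain z where z: "xs \<longlonglongrightarrow> z" using Cauchy_convergent_iff convergent_def by blast
  have contJ: "continuous_on UNIV J" unfolding J_def
    by (intro continuous_intros f.continuous_on continuous_on_id)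
  have "(\<lambda>n. J (xs n)) \<longlonglongrightarrow> J z"
    using continuous_on_tendsto_compose[OF contJ z] by auto
  moreover have "(\<lambda>n. m + 1 / real (Suc n)) \<longlonglongrightarrow> m"
    using tendsto_add[OF tendsto_const LIMSEQ_inverse_real_of_nat] by (simp add: inverse_eq_divide)
  ultimately have "J z \<le> m" using xs by (intro LIMSEQ_le[of "\<lambda>n. J (xs n)" _ "\<lambda>n. m + 1 / real (Suc n)"]) (auto intro: less_imp_le)
  hence zmin: "J z \<le> J y" for y using mle[of y] by linarith
  show ?thesis
  proof (intro exI allI)
    fix v
    define a where "a = inner z v - f v"
    define q where "q = inner v v"
    have q0: "q \<ge> 0" unfolding q_def by simp
    have key: "0 \<le> 2 * t * a + t\<^sup>2 * q" for t
    proof -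
      have "J z \<le> J (z + t *\<^sub>R v)" by (rule zmin)
      moreover have "J (z + t *\<^sub>R v) = inner z z + 2 * t * inner z v + t\<^sup>2 * inner v v - 2 * f z - 2 * t * f v"
        unfolding J_def power2_norm_eq_inner by (simp add: inner_add inner_commute f.add f.scaleR algebra_simps power2_eq_square)
      moreover have "J z = inner z z - 2 * f z" unfolding J_def by (simp add: power2_norm_eq_inner)
      ultimately show ?thesis unfolding a_def q_def by (simp add: algebra_simps)
    qed
    define r where "r = 1 / (q + 1)"
    have r0: "r > 0" unfolding r_def using q0 by simp
    have rq: "r * q = 1 - r" unfolding r_def using q0 by (simp add: field_simps)
    have k1: "0 \<le> 2 * (- a * r) * a + (- a * r)\<^sup>2 * q" by (rule key)
    have "(- a * r)\<^sup>2 * q = a\<^sup>2 * r * (r * q)" by (simp add: power2_eq_square algebra_simps)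
    also have "\<dots> = a\<^sup>2 * r * (1 - r)" by (simp add: rq)
    finally have "2 * (- a * r) * a + (- a * r)\<^sup>2 * q = - (a\<^sup>2 * (r * (1 + r)))"
      by (simp add: power2_eq_square algebra_simps)
    with k1 have "a\<^sup>2 * (r * (1 + r)) \<le> 0" by linarith
    moreover have "r * (1 + r) > 0" using r0 by simp
    ultimately have "a\<^sup>2 \<le> 0" by (metis mult_le_0_iff not_le zero_le_power2 order.strict_iff_order)
    hence "a = 0" by simp
    thus "f v = inner z v" unfolding a_def by simp
  qed
qed


lemma Kfun_bound:
  fixes Y :: "'y::real_normed_vector set"
  assumes s0: "0 < s" and s1: "s < 1" and T0: "T > 0" and Y0: "0 \<in> Y"
    and nY0: "\<And>y. y \<in> Y \<Longrightarrow> nY y \<ge> 0" and fin: "interp_integral s Y nY y < \<infinity>"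
  shows "Kfun Y nY T y \<le> 3 * T powr s * sqrt (enn2real (interp_integral s Y nY y))"
proof -
  define S where "S t = {norm y0 + t * nY y1 | y0 y1. y1 \<in> Y \<and> y = y0 + y1}" for t
  have KS: "Kfun Y nY t y = Inf (S t)" for t unfolding Kfun_def S_def by simp
  have ne: "S t \<noteq> {}" for t unfolding S_def using Y0 by force
  have bdd: "t \<ge> 0 \<Longrightarrow> bdd_below (S t)" for t unfolding S_def
    by (rule bdd_belowI[where m=0]) (auto intro!: add_nonneg_nonneg mult_nonneg_nonneg nY0)
  have K0: "t \<ge> 0 \<Longrightarrow> Kfun Y nY t y \<ge> 0" for t unfolding KS
    by (rule cInf_greatest[OF ne]) (auto simp: S_def intro!: add_nonneg_nonneg mult_nonneg_nonneg nY0)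
  have Kmono: "0 \<le> T' \<Longrightarrow> T' \<le> t \<Longrightarrow> Kfun Y nY T' y \<le> Kfun Y nY t y" for T' t
    unfolding KS
  proof (rule cInf_greatest[OF ne])
    fix w assume T't: "0 \<le> T'" "T' \<le> t" and "w \<in> S t"
    then obtain y0 y1 where w: "w = norm y0 + t * nY y1" "y1 \<in> Y" "y = y0 + y1" unfolding S_def by blast
    have "norm y0 + T' * nY y1 \<in> S T'" unfolding S_def using w by blast
    hence "Inf (S T') \<le> norm y0 + T' * nY y1" using bdd[OF T't(1)] by (simp add: cInf_lower)
    also have "\<dots> \<le> w" unfolding w using T't nY0[OF w(2)] by (simp add: mult_right_mono)
    finally show "Inf (S T') \<le> w" .
  qed
  define k where "k = Kfun Y nY T y"
  define P where "P = (2*T) powr (- s)"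
  define c0 where "c0 = (P * k)\<^sup>2 / (2*T)"
  have k0: "k \<ge> 0" unfolding k_def using K0 T0 by simp
  have P0: "P \<ge> 0" unfolding P_def by simp
  have c00: "c0 \<ge> 0" unfolding c0_def using T0 by simp
  have pw: "ennreal c0 * indicator {T..2*T} t \<le> ennreal ((t powr (- s) * Kfun Y nY t y)\<^sup>2 / t) * indicator {0<..} t" for t
  proof (cases "t \<in> {T..2*T}")
    case True
    hence t: "T \<le> t" "t \<le> 2*T" "t > 0" using T0 by auto
    have "P \<le> t powr (- s)" unfolding P_def using t s0 by (intro powr_mono2') auto
    moreover have "k \<le> Kfun Y nY t y" unfolding k_def using Kmono[of T t] T0 t by simp
    ultimately have "P * k \<le> t powr (- s) * Kfun Y nY t y" using P0 k0 by (intro mult_mono) auto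
    hence "(P * k)\<^sup>2 \<le> (t powr (- s) * Kfun Y nY t y)\<^sup>2" using P0 k0 by (intro power_mono) auto
    hence "c0 \<le> (t powr (- s) * Kfun Y nY t y)\<^sup>2 / t" unfolding c0_def using t
      by (intro frac_le) auto
    thus ?thesis using True t by (simp add: ennreal_leI)
  qed simp
  have "ennreal (c0 * T) = ennreal c0 * emeasure lborel {T..2*T}" using T0
    by (simp add: ennreal_mult c00)
  also have "\<dots> = (\<integral>\<^sup>+ t. ennreal c0 * indicator {T..2*T} t \<partial>lborel)"
    by (rule nn_integral_cmult_indicator[symmetric]) simp
  also have "\<dots> \<le> interp_integral s Y nY y" unfolding interp_integral_def
    by (intro nn_integral_mono pw)
  finally have le1: "ennreal (c0 * T) \<le> interp_integral s Y nY y" .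
  define E where "E = enn2real (interp_integral s Y nY y)"
  have E0: "E \<ge> 0" unfolding E_def by simp
  have "c0 * T \<le> E" unfolding E_def using enn2real_mono[OF le1] fin c00 T0 by simp
  moreover have "c0 * T = (P * k)\<^sup>2 / 2" unfolding c0_def using T0 by (simp add: field_simps power2_eq_square)
  ultimately have "(P * k)\<^sup>2 \<le> 2 * E" by simp
  hence "P * k \<le> sqrt (2 * E)" using P0 k0 by (simp add: real_le_rsqrt)
  also have "\<dots> = sqrt 2 * sqrt E" by (simp add: real_sqrt_mult)
  also have "\<dots> \<le> (3/2) * sqrt E"
  proof -
    have "sqrt 2 \<le> 3/2" by (rule real_le_lsqrt) (auto simp: power2_eq_square)
    thus ?thesis using E0 by (intro mult_right_mono) auto
  qed
  finally have Pk: "P * k \<le> (3/2) * sqrt E" .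
  define Q where "Q = (2*T) powr s"
  have PQ: "Q * P = 1" unfolding P_def Q_def using T0 by (simp add: powr_add[symmetric])
  have Q0: "Q \<ge> 0" unfolding Q_def by simp
  have "Q = 2 powr s * T powr s" unfolding Q_def using T0 by (simp add: powr_mult)
  also have "\<dots> \<le> 2 * T powr s"
  proof -
    have "(2::real) powr s \<le> 2 powr 1" using s1 by (intro powr_mono) auto
    thus ?thesis by (intro mult_right_mono) auto
  qed
  finally have Qle: "Q \<le> 2 * T powr s" .
  have "k = Q * (P * k)" using PQ by (simp add: mult.assoc[symmetric])
  also have "\<dots> \<le> Q * ((3/2) * sqrt E)" using Pk Q0 by (intro mult_left_mono)
  also have "\<dots> \<le> (2 * T powr s) * ((3/2) * sqrt E)" using Qle E0 by (intro mult_right_mono) auto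
  finally show ?thesis unfolding k_def E_def by simp
qed


lemma sum_sq_bound:
  fixes a b L :: real
  assumes "a \<ge> 0" "b \<ge> 0" "L \<ge> 0" "a\<^sup>2 + b\<^sup>2 \<le> L * (a + b)"
  shows "a + b \<le> 2 * L"
proof (cases "a + b = 0")
  case True
  then show ?thesis using assms by simp
next
  case False
  hence ab: "a + b > 0" using assms by simp
  have "0 \<le> (a - b)\<^sup>2" by simp
  hence "(a + b)\<^sup>2 \<le> 2 * (a\<^sup>2 + b\<^sup>2)" by (simp add: power2_sum power2_diff)
  also have "\<dots> \<le> 2 * L * (a + b)" using assms by simp
  finally have "(a + b) * (a + b) \<le> (2 * L) * (a + b)" by (simp add: power2_eq_square)
  thus ?thesis using ab by simp
qed

theorem mainTheorem6:
  fixes Ysp :: "('y::{real_inner, complete_space}) set"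
    and d :: "'y \<Rightarrow> 'y \<Rightarrow> real"
    and Bop :: "'y \<Rightarrow> ('x::{real_inner, complete_space} \<Rightarrow>\<^sub>L real)"
    and Yh :: "real \<Rightarrow> 'y set" and Ph :: "real \<Rightarrow> 'y \<Rightarrow> 'y"
    and Uh :: "real \<Rightarrow> ('x \<Rightarrow>\<^sub>L real) set" and Xh :: "real \<Rightarrow> 'x set"
    and Pih :: "real \<Rightarrow> 'x \<Rightarrow> 'x"
    and h0 \<alpha> c1 c2 cS cPi CE CB CB' s :: real
  assumes
    \<comment> \<open>Y: dense subspace of the Hilbert space H_Y, Hilbert w.r.t. the D-inner product\<close>
    Y_subspace: "subspace Ysp"
    and Y_dense: "closure Ysp = UNIV"
    and d_add: "\<And>a b z. a \<in> Ysp \<Longrightarrow> b \<in> Ysp \<Longrightarrow> z \<in> Ysp \<Longrightarrow> d (a + b) z = d a z + d b z"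
    and d_scale: "\<And>r a z. a \<in> Ysp \<Longrightarrow> z \<in> Ysp \<Longrightarrow> d (r *\<^sub>R a) z = r * d a z"
    and d_sym: "\<And>a z. a \<in> Ysp \<Longrightarrow> z \<in> Ysp \<Longrightarrow> d a z = d z a"
    and d_pos: "\<And>a. a \<in> Ysp \<Longrightarrow> a \<noteq> 0 \<Longrightarrow> d a a > 0"
    and Y_complete: "\<And>f. (\<forall>n. f n \<in> Ysp) \<Longrightarrow>
        (\<forall>e>0. \<exists>N. \<forall>m\<ge>N. \<forall>n\<ge>N. Dnorm d (f m - f n) < e) \<Longrightarrow>
        (\<exists>l\<in>Ysp. (\<lambda>n. Dnorm d (f n - l)) \<longlonglongrightarrow> 0)"
    and CE_pos: "CE > 0"
    and Y_embed: "\<And>y. y \<in> Ysp \<Longrightarrow> norm y \<le> CE * Dnorm d y"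
    \<comment> \<open>B : Y \<rightarrow> X^* bounded linear isomorphism\<close>
    and B_add: "\<And>a b. a \<in> Ysp \<Longrightarrow> b \<in> Ysp \<Longrightarrow> Bop (a + b) = Bop a + Bop b"
    and B_scale: "\<And>r a. a \<in> Ysp \<Longrightarrow> Bop (r *\<^sub>R a) = r *\<^sub>R Bop a"
    and B_bij: "bij_betw Bop Ysp UNIV"
    and CB_pos: "CB > 0" and CB'_pos: "CB' > 0"
    and B_bound: "\<And>y. y \<in> Ysp \<Longrightarrow> norm (Bop y) \<le> CB * Dnorm d y"
    and B_inv_bound: "\<And>y. y \<in> Ysp \<Longrightarrow> Dnorm d y \<le> CB' * norm (Bop y)"
    \<comment> \<open>discretization parameters\<close>
    and h0_pos: "h0 > 0" and alpha_pos: "\<alpha> > 0"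
    and c1_pos: "c1 > 0" and c2_pos: "c2 > 0" and cS_pos: "cS > 0" and cPi_pos: "cPi > 0"
    and Yh_sub: "\<And>h. h \<in> {0<..h0} \<Longrightarrow> subspace (Yh h) \<and> Yh h \<subseteq> Ysp \<and>
                     (\<exists>A. finite A \<and> span A = Yh h)"
    and Ph_map: "\<And>h y. h \<in> {0<..h0} \<Longrightarrow> y \<in> Ysp \<Longrightarrow> Ph h y \<in> Yh h"
    and Ph_H: "\<And>h y. h \<in> {0<..h0} \<Longrightarrow> y \<in> Ysp \<Longrightarrow>
                 norm (y - Ph h y) \<le> c1 * h powr \<alpha> * Dnorm d y"
    and Ph_D: "\<And>h y. h \<in> {0<..h0} \<Longrightarrow> y \<in> Ysp \<Longrightarrow>
                 Dnorm d (y - Ph h y) \<le> c2 * Dnorm d y"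
    and Uh_sub: "\<And>h. h \<in> {0<..h0} \<Longrightarrow> subspace (Uh h) \<and> (\<exists>A. finite A \<and> span A = Uh h)"
    and Xh_sub: "\<And>h. h \<in> {0<..h0} \<Longrightarrow> subspace (Xh h) \<and> (\<exists>A. finite A \<and> span A = Xh h)"
    and dim_eq: "\<And>h. h \<in> {0<..h0} \<Longrightarrow> dim (Uh h) = dim (Xh h)"
    and inf_sup: "\<And>h u. h \<in> {0<..h0} \<Longrightarrow> u \<in> Uh h \<Longrightarrow> u \<noteq> 0 \<Longrightarrow>
        cS * norm u \<le> (SUP x \<in> Xh h - {0}. blinfun_apply u x / norm x)"
    and Pih_map: "\<And>h x. h \<in> {0<..h0} \<Longrightarrow> Pih h x \<in> Xh h"
    and Pih_approx: "\<And>h x z. h \<in> {0<..h0} \<Longrightarrow>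
        (\<forall>y\<in>Ysp. blinfun_apply (Bop y) x = inner y z) \<Longrightarrow>
        norm (x - Pih h x) \<le> cPi * h powr \<alpha> * norm z"
    \<comment> \<open>interpolation exponent\<close>
    and s_range: "0 \<le> s" "s \<le> 1"
  shows "\<exists>c. \<forall>h \<in> {0<..h0}. \<forall>ybar \<in> interp_space s Ysp (Dnorm d).
           \<forall>yrh ut yt.
             (yrh \<in> Yh h \<and>
              (\<forall>z \<in> Yh h. inner yrh z + h powr (2 * \<alpha>) * d yrh z = inner ybar z)) \<longrightarrow>
             (ut \<in> Uh h \<and> (\<forall>xh \<in> Xh h. blinfun_apply ut xh = blinfun_apply (Bop yrh) xh)) \<longrightarrow>
             (yt \<in> Ysp \<and> Bop yt = ut) \<longrightarrow>
             norm (yt - ybar) \<le> c * h powr (\<alpha> * s) * interp_norm s Ysp (Dnorm d) ybar"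
proof -
  define Dn where "Dn = Dnorm d"
  have Ysub: "subspace Ysp" by (rule Y_subspace)
  have Y0: "0 \<in> Ysp" using Ysub by (rule subspace_0)
  have Ydiff: "a \<in> Ysp \<Longrightarrow> b \<in> Ysp \<Longrightarrow> a - b \<in> Ysp" for a b using Ysub by (rule subspace_diff)
  have d0: "d 0 z = 0" if "z \<in> Ysp" for z
    using d_scale[where r=0 and a=z and z=z] that by simp
  have dnn: "d a a \<ge> 0" if "a \<in> Ysp" for a
    using d_pos[OF that] d0[OF that] by (cases "a = 0") (auto simp: less_imp_le)
  have dminus: "d (a - b) z = d a z - d b z" if "a \<in> Ysp" "b \<in> Ysp" "z \<in> Ysp" for a b z
  proof -
    have "-b \<in> Ysp" using Ysub that(2) by (rule subspace_neg)
    have 1: "d (a + - b) z = d a z + d (- b) z"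
      using d_add[OF that(1) \<open>-b \<in> Ysp\<close> that(3)] .
    have 2: "d (- b) z = - d b z" using d_scale[OF that(2,3), of "-1"] by simp
    show ?thesis using 1 2 by simp
  qed
  have dminus2: "d z (a - b) = d z a - d z b" if "a \<in> Ysp" "b \<in> Ysp" "z \<in> Ysp" for a b z
  proof -
    have "d z (a - b) = d (a - b) z" using d_sym[OF Ydiff[OF that(1,2)] that(3)] by simp
    also have "\<dots> = d a z - d b z" using dminus[OF that] .
    also have "\<dots> = d z a - d z b" using d_sym[OF that(1,3)] d_sym[OF that(2,3)] by simp
    finally show ?thesis .
  qed
  have Dsq: "(Dn a)\<^sup>2 = d a a" if "a \<in> Ysp" for a
    unfolding Dn_def Dnorm_def using dnn[OF that] by simp
  have Dnn: "Dn a \<ge> 0" if "a \<in> Ysp" for a unfolding Dn_def Dnorm_def using dnn[OF that] by simp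
  have CS: "\<bar>d a b\<bar> \<le> Dn a * Dn b" if ab: "a \<in> Ysp" "b \<in> Ysp" for a b
  proof (cases "b = 0")
    case True
    have "d a b = 0" using True d0[OF ab(1)] d_sym[OF ab] by simp
    thus ?thesis using Dnn ab by simp
  next
    case False
    have bb: "d b b > 0" using d_pos[OF ab(2) False] .
    define r where "r = d a b / d b b"
    have "a - r *\<^sub>R b \<in> Ysp" using Ysub ab by (intro subspace_diff subspace_scale) auto
    hence "0 \<le> d (a - r *\<^sub>R b) (a - r *\<^sub>R b)" by (rule dnn)
    also have "d (a - r *\<^sub>R b) (a - r *\<^sub>R b) = d a a - 2 * r * d a b + r\<^sup>2 * d b b"
    proof -
      have rb: "r *\<^sub>R b \<in> Ysp" using Ysub ab by (intro subspace_scale) auto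
      have amr: "a - r *\<^sub>R b \<in> Ysp" by fact
      have "d (a - r *\<^sub>R b) (a - r *\<^sub>R b) = d a (a - r *\<^sub>R b) - d (r *\<^sub>R b) (a - r *\<^sub>R b)"
        using dminus[OF ab(1) rb amr] .
      also have "d a (a - r *\<^sub>R b) = d a a - d a (r *\<^sub>R b)" using dminus2[OF ab(1) rb ab(1)] .
      also have "d (r *\<^sub>R b) (a - r *\<^sub>R b) = r * d b (a - r *\<^sub>R b)" using d_scale[OF ab(2) amr] .
      also have "d b (a - r *\<^sub>R b) = d b a - d b (r *\<^sub>R b)" using dminus2[OF ab(1) rb ab(2)] .
      also have "d a (r *\<^sub>R b) = r * d a b" using d_sym[OF rb ab(1)] d_scale[OF ab(2,1)] d_sym[OF ab] by simp
      also have "d b (r *\<^sub>R b) = r * d b b" using d_sym[OF rb ab(2)] d_scale[OF ab(2,2)] by simp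
      also have "d b a = d a b" using d_sym[OF ab] by simp
      finally show ?thesis by (simp add: algebra_simps power2_eq_square)
    qed
    also have "\<dots> = d a a - (d a b)\<^sup>2 / d b b" unfolding r_def using bb by (simp add: field_simps power2_eq_square)
    finally have "(d a b)\<^sup>2 \<le> d a a * d b b" using bb by (simp add: field_simps)
    hence "(d a b)\<^sup>2 \<le> ((Dn a) * (Dn b))\<^sup>2" using Dsq ab by (simp add: power_mult_distrib)
    hence "\<bar>d a b\<bar>\<^sup>2 \<le> (Dn a * Dn b)\<^sup>2" by simp
    moreover have "0 \<le> Dn a * Dn b" using Dnn ab by simp
    ultimately show ?thesis by (rule power2_le_imp_le)
  qed
  define Binv where "Binv = inv_into Ysp Bop"
  have Binj: "inj_on Bop Ysp" using B_bij by (simp add: bij_betw_def)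
  have Bsurj: "Bop ` Ysp = UNIV" using B_bij by (simp add: bij_betw_def)
  have Binv_in: "Binv u \<in> Ysp" for u unfolding Binv_def using Bsurj inv_into_into[of u Bop Ysp] by simp
  have B_Binv: "Bop (Binv u) = u" for u unfolding Binv_def using Bsurj f_inv_into_f[of u Bop Ysp] by simp
  have Binv_B: "y \<in> Ysp \<Longrightarrow> Binv (Bop y) = y" for y unfolding Binv_def using Binj by simp
  have Bdiff: "Bop (a - b) = Bop a - Bop b" if "a \<in> Ysp" "b \<in> Ysp" for a b
  proof -
    have "(-1) *\<^sub>R b \<in> Ysp" using Ysub that(2) by (intro subspace_scale)
    hence "Bop (a + (-1) *\<^sub>R b) = Bop a + Bop ((-1) *\<^sub>R b)" using B_add that by blast
    also have "Bop ((-1) *\<^sub>R b) = - Bop b" using B_scale[OF that(2), of "-1"] by simp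
    finally show ?thesis by simp
  qed
  have Binv_add: "Binv (u + w) = Binv u + Binv w" for u w
  proof -
    have "Binv u + Binv w \<in> Ysp" using Ysub Binv_in by (intro subspace_add)
    moreover have "Bop (Binv u + Binv w) = u + w" using B_add[OF Binv_in Binv_in] B_Binv by simp
    ultimately show ?thesis using Binv_B by (metis (no_types))
  qed
  have Binv_scale: "Binv (r *\<^sub>R u) = r *\<^sub>R Binv u" for r u
  proof -
    have "r *\<^sub>R Binv u \<in> Ysp" using Ysub Binv_in by (intro subspace_scale)
    moreover have "Bop (r *\<^sub>R Binv u) = r *\<^sub>R u" using B_scale[OF Binv_in] B_Binv by simp
    ultimately show ?thesis using Binv_B by (metis (no_types))
  qed
  have Binv_norm: "norm (Binv u) \<le> CE * CB' * norm u" for u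
  proof -
    have "norm (Binv u) \<le> CE * Dnorm d (Binv u)" using Y_embed[OF Binv_in] .
    also have "\<dots> \<le> CE * (CB' * norm (Bop (Binv u)))" using B_inv_bound[OF Binv_in] CE_pos
      by (intro mult_left_mono) auto
    finally show ?thesis using B_Binv by (simp add: mult.assoc)
  qed
  have rep: "\<exists>x. \<forall>y\<in>Ysp. blinfun_apply (Bop y) x = inner y w" for w
  proof -
    define \<psi> where "\<psi> z = inner (Binv (blinfun_inner_left z)) w" for z :: 'x
    have bil_norm: "norm (blinfun_inner_left z) \<le> norm z" for z :: 'x
      by (rule norm_blinfun_bound) (auto simp: Cauchy_Schwarz_ineq2 mult.commute)
    have "bounded_linear \<psi>"
    proof (rule bounded_linear_intro[where K="CE * CB' * norm w"])
      fix a b :: 'x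
      have "blinfun_inner_left (a + b) = blinfun_inner_left a + blinfun_inner_left b"
        by (rule blinfun_eqI) (simp add: inner_add plus_blinfun.rep_eq)
      thus "\<psi> (a + b) = \<psi> a + \<psi> b" unfolding \<psi>_def by (simp add: Binv_add inner_add)
    next
      fix r :: real and a :: 'x
      have "blinfun_inner_left (r *\<^sub>R a) = r *\<^sub>R blinfun_inner_left a"
        by (rule blinfun_eqI) (simp add: scaleR_blinfun.rep_eq)
      thus "\<psi> (r *\<^sub>R a) = r *\<^sub>R \<psi> a" unfolding \<psi>_def by (simp add: Binv_scale)
    next
      fix a :: 'x
      have "norm (\<psi> a) \<le> norm (Binv (blinfun_inner_left a)) * norm w"
        unfolding \<psi>_def using Cauchy_Schwarz_ineq2 by simp
      also have "\<dots> \<le> (CE * CB' * norm (blinfun_inner_left a)) * norm w"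
        by (intro mult_right_mono Binv_norm) auto
      also have "\<dots> \<le> (CE * CB' * norm a) * norm w"
        using CE_pos CB'_pos bil_norm by (intro mult_right_mono mult_left_mono) auto
      finally show "norm (\<psi> a) \<le> norm a * (CE * CB' * norm w)" by (simp add: ac_simps)
    qed
    then obtain x0 where x0: "\<And>z. \<psi> z = inner x0 z" using riesz_rep by blast
    show ?thesis
    proof (intro exI ballI)
      fix y assume y: "y \<in> Ysp"
      have "bounded_linear (blinfun_apply (Bop y))" by (rule blinfun.bounded_linear_right)
      then obtain zy where zy: "\<And>\<xi>. blinfun_apply (Bop y) \<xi> = inner zy \<xi>" using riesz_rep by blast
      have "Bop y = blinfun_inner_left zy" by (rule blinfun_eqI) (simp add: zy inner_commute)
      hence "inner y w = \<psi> zy" unfolding \<psi>_def using Binv_B[OF y] by simp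
      also have "\<dots> = inner x0 zy" by (rule x0)
      also have "\<dots> = blinfun_apply (Bop y) x0" by (simp add: zy inner_commute)
      finally show "blinfun_apply (Bop y) x0 = inner y w" by simp
    qed
  qed
  define K0 where "K0 = 2 + c1 + c2"
  define Cu where "Cu = CB / cS + CB"
  define C' where "C' = (Cu * cPi + 1) * 2 * K0"
  have K0pos: "K0 > 0" unfolding K0_def using c1_pos c2_pos by simp
  have Cupos: "Cu > 0" unfolding Cu_def using CB_pos cS_pos by (intro add_pos_pos divide_pos_pos)
  have C'pos: "C' > 0" unfolding C'_def using K0pos Cupos cPi_pos by (intro mult_pos_pos add_pos_pos) auto
  have est: "norm (yt - ybar) \<le> C' * (norm y0 + h powr \<alpha> * Dn y1)"
    if h: "h \<in> {0<..h0}"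
      and yrh: "yrh \<in> Yh h" "\<forall>z \<in> Yh h. inner yrh z + h powr (2 * \<alpha>) * d yrh z = inner ybar z"
      and ut: "ut \<in> Uh h" "\<forall>xh \<in> Xh h. blinfun_apply ut xh = blinfun_apply (Bop yrh) xh"
      and yt: "yt \<in> Ysp" "Bop yt = ut"
      and dec: "y1 \<in> Ysp" "ybar = y0 + y1"
    for h ybar yrh ut yt y0 y1
  proof -
    define t where "t = h powr \<alpha>"
    have hpos: "h > 0" using h by simp
    have tpos: "t > 0" unfolding t_def using hpos by simp
    have rho: "h powr (2 * \<alpha>) = t\<^sup>2" unfolding t_def using hpos
      by (simp add: power2_eq_square powr_add[symmetric])
    have Yh: "subspace (Yh h)" "Yh h \<subseteq> Ysp" using Yh_sub[OF h] by auto
    define p where "p = Ph h y1"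
    have pYh: "p \<in> Yh h" unfolding p_def using Ph_map[OF h dec(1)] .
    have pY: "p \<in> Ysp" using pYh Yh by auto
    have yrhY: "yrh \<in> Ysp" using yrh Yh by auto
    have zYh: "yrh - p \<in> Yh h" using Yh(1) yrh(1) pYh by (rule subspace_diff)
    have zY: "yrh - p \<in> Ysp" using zYh Yh by auto
    have y1p: "y1 - p \<in> Ysp" using Ydiff dec(1) pY by simp
    define e where "e = yrh - ybar"
    define a where "a = norm e"
    define D where "D = Dn yrh"
    define N1 where "N1 = Dn y1"
    define M where "M = norm y0 + t * N1"
    define b where "b = t * D"
    have a0: "a \<ge> 0" unfolding a_def by simp
    have D0: "D \<ge> 0" unfolding D_def by (rule Dnn[OF yrhY])
    have N10: "N1 \<ge> 0" unfolding N1_def by (rule Dnn[OF dec(1)])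
    have b0: "b \<ge> 0" unfolding b_def using tpos D0 by simp
    have M0: "M \<ge> 0" unfolding M_def using tpos N10 by simp
    have gal: "inner yrh (yrh - p) + t\<^sup>2 * d yrh (yrh - p) = inner ybar (yrh - p)"
      using yrh(2) zYh rho by auto
    have dexp: "d yrh (yrh - p) = D\<^sup>2 - d yrh p"
      using dminus2[OF yrhY pY yrhY] Dsq[OF yrhY] unfolding D_def by simp
    have decomp: "yrh - p = e + (y0 + (y1 - p))" unfolding e_def using dec(2) by simp
    have iexp: "inner e (yrh - p) = a\<^sup>2 + inner e (y0 + (y1 - p))"
      unfolding decomp a_def by (simp add: inner_add power2_norm_eq_inner)
    have eq: "a\<^sup>2 + t\<^sup>2 * D\<^sup>2 = - inner e (y0 + (y1 - p)) + t\<^sup>2 * d yrh p"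
    proof -
      have "inner e (yrh - p) + t\<^sup>2 * d yrh (yrh - p) = 0"
        using gal unfolding e_def by (simp add: inner_diff_left)
      thus ?thesis using iexp dexp by (simp add: algebra_simps)
    qed
    have t1: "- inner e (y0 + (y1 - p)) \<le> a * (norm y0 + c1 * t * N1)"
    proof -
      have "- inner e (y0 + (y1 - p)) \<le> a * norm (y0 + (y1 - p))"
        unfolding a_def using Cauchy_Schwarz_ineq2[of e "y0 + (y1 - p)"] by simp
      also have "\<dots> \<le> a * (norm y0 + norm (y1 - p))" using a0 norm_triangle_ineq by (intro mult_left_mono) auto
      also have "norm (y1 - p) \<le> c1 * t * N1" unfolding p_def t_def N1_def Dn_def using Ph_H[OF h dec(1)] .
      hence "a * (norm y0 + norm (y1 - p)) \<le> a * (norm y0 + c1 * t * N1)" using a0 by (intro mult_left_mono) auto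
      finally show ?thesis .
    qed
    have t2: "d yrh p \<le> D * ((1 + c2) * N1)"
    proof -
      have "p = y1 - (y1 - p)" by simp
      hence "d yrh p = d yrh y1 - d yrh (y1 - p)" using dminus2[OF dec(1) y1p yrhY] by simp
      also have "\<dots> \<le> D * N1 + D * Dn (y1 - p)"
        using CS[OF yrhY dec(1)] CS[OF yrhY y1p]
        unfolding D_def N1_def by linarith
      also have "Dn (y1 - p) \<le> c2 * N1" unfolding p_def N1_def Dn_def using Ph_D[OF h dec(1)] .
      hence "D * N1 + D * Dn (y1 - p) \<le> D * N1 + D * (c2 * N1)" using D0 by (intro add_left_mono mult_left_mono) auto
      finally show ?thesis by (simp add: algebra_simps)
    qed
    have main: "a\<^sup>2 + b\<^sup>2 \<le> K0 * M * (a + b)"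
    proof -
      have "a\<^sup>2 + b\<^sup>2 = - inner e (y0 + (y1 - p)) + t\<^sup>2 * d yrh p" using eq unfolding b_def by (simp add: power_mult_distrib)
      also have "\<dots> \<le> a * (norm y0 + c1 * t * N1) + t\<^sup>2 * (D * ((1 + c2) * N1))"
        using t1 t2 by (intro add_mono mult_left_mono) auto
      also have "a * (norm y0 + c1 * t * N1) \<le> a * (K0 * M)"
      proof -
        have "norm y0 + c1 * t * N1 \<le> K0 * norm y0 + K0 * (t * N1)"
        proof (intro add_mono)
          show "norm y0 \<le> K0 * norm y0" using K0_def c1_pos c2_pos mult_right_mono[of 1 K0 "norm y0"] by simp
          show "c1 * t * N1 \<le> K0 * (t * N1)" using K0_def c1_pos c2_pos tpos N10 mult_right_mono[of c1 K0 "t * N1"] by (simp add: mult.assoc)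
        qed
        thus ?thesis unfolding M_def using a0 by (intro mult_left_mono) (auto simp: algebra_simps)
      qed
      also have "t\<^sup>2 * (D * ((1 + c2) * N1)) \<le> b * (K0 * M)"
      proof -
        have "t\<^sup>2 * (D * ((1 + c2) * N1)) = b * ((1 + c2) * (t * N1))" unfolding b_def by (simp add: power2_eq_square algebra_simps)
        also have "(1 + c2) * (t * N1) \<le> K0 * M"
        proof -
          have "(1 + c2) * (t * N1) \<le> K0 * (t * N1)" using K0_def c1_pos tpos N10 by (intro mult_right_mono) auto
          also have "\<dots> \<le> K0 * M" unfolding M_def using K0pos by (intro mult_left_mono) auto
          finally show ?thesis .
        qed
        hence "b * ((1 + c2) * (t * N1)) \<le> b * (K0 * M)" using b0 by (intro mult_left_mono)
        finally show ?thesis .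
      qed
      finally show ?thesis by (simp add: algebra_simps)
    qed
    have ab: "a + b \<le> 2 * (K0 * M)" using sum_sq_bound[OF a0 b0 _ main] K0pos M0 by simp
    define v where "v = yt - yrh"
    have vY: "v \<in> Ysp" unfolding v_def using Ydiff yt(1) yrhY by simp
    have Bv: "Bop v = ut - Bop yrh" unfolding v_def using Bdiff[OF yt(1) yrhY] yt(2) by simp
    have utb: "norm ut \<le> CB / cS * D"
    proof (cases "ut = 0")
      case True thus ?thesis using CB_pos cS_pos D0 by simp
    next
      case False
      have ne: "Xh h - {0} \<noteq> {}"
      proof
        assume "Xh h - {0} = {}"
        hence X0: "Xh h \<subseteq> {0}" by blast
        obtain BX where BX: "BX \<subseteq> Xh h" "independent BX" "Xh h \<subseteq> span BX" "card BX = dim (Xh h)"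
          using real_vector.basis_exists by blast
        have "BX = {}" using BX X0 real_vector.dependent_zero by blast
        hence "dim (Xh h) = 0" using BX by simp
        hence dU: "dim (Uh h) = 0" using dim_eq[OF h] by simp
        obtain A where A: "finite A" "span A = Uh h" using Uh_sub[OF h] by blast
        obtain BU where BU: "BU \<subseteq> Uh h" "independent BU" "Uh h \<subseteq> span BU" "card BU = dim (Uh h)"
          using real_vector.basis_exists by blast
        have "finite BU" using real_vector.independent_span_bound[OF A(1) BU(2)] BU(1) A(2) by auto
        hence "BU = {}" using BU dU by simp
        hence "Uh h \<subseteq> {0}" using BU(3) real_vector.span_empty by simp
        thus False using ut(1) False by blast
      qed
      have "cS * norm ut \<le> (SUP x \<in> Xh h - {0}. blinfun_apply ut x / norm x)" using inf_sup[OF h ut(1) False] .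
      also have "\<dots> \<le> norm (Bop yrh)"
      proof (rule cSUP_least[OF ne])
        fix x assume x: "x \<in> Xh h - {0}"
        hence nx: "norm x > 0" by simp
        have "blinfun_apply ut x = blinfun_apply (Bop yrh) x" using ut(2) x by auto
        also have "\<dots> \<le> norm (Bop yrh) * norm x" using norm_blinfun[of "Bop yrh" x] by simp
        finally show "blinfun_apply ut x / norm x \<le> norm (Bop yrh)" using nx by (simp add: divide_le_eq)
      qed
      also have "\<dots> \<le> CB * D" unfolding D_def Dn_def using B_bound[OF yrhY] .
      finally show ?thesis using cS_pos by (simp add: field_simps)
    qed
    have vbound: "norm v \<le> Cu * cPi * b"
    proof -
      obtain x0 where x0: "\<And>y. y \<in> Ysp \<Longrightarrow> blinfun_apply (Bop y) x0 = inner y v" using rep[of v] by blast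
      define xp where "xp = Pih h x0"
      have xp: "xp \<in> Xh h" unfolding xp_def by (rule Pih_map[OF h])
      have apx: "norm (x0 - xp) \<le> cPi * t * norm v" unfolding xp_def t_def
        using Pih_approx[OF h, of x0 v] x0 by blast
      have "(norm v)\<^sup>2 = inner v v" by (simp add: power2_norm_eq_inner)
      also have "\<dots> = blinfun_apply (ut - Bop yrh) x0" using x0[OF vY] Bv by simp
      also have "\<dots> = blinfun_apply (ut - Bop yrh) (x0 - xp)"
        using ut(2) xp by (simp add: blinfun.diff_left blinfun.diff_right)
      also have "\<dots> \<le> norm (ut - Bop yrh) * norm (x0 - xp)" using norm_blinfun by (metis abs_le_D1 real_norm_def)
      also have "\<dots> \<le> (Cu * D) * (cPi * t * norm v)"
      proof (intro mult_mono apx)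
        have "norm (ut - Bop yrh) \<le> norm ut + norm (Bop yrh)" by (rule norm_triangle_ineq4)
        also have "\<dots> \<le> CB / cS * D + CB * D" using utb B_bound[OF yrhY] unfolding D_def Dn_def by (intro add_mono)
        finally show "norm (ut - Bop yrh) \<le> Cu * D" unfolding Cu_def by (simp add: algebra_simps)
        show "0 \<le> Cu * D" using Cupos D0 by simp
      qed auto
      also have "\<dots> = (Cu * cPi * b) * norm v" unfolding b_def by (simp add: algebra_simps)
      finally have "norm v * norm v \<le> (Cu * cPi * b) * norm v" by (simp add: power2_eq_square)
      thus ?thesis by (cases "norm v = 0") (use Cupos cPi_pos b0 in auto)
    qed
    have "yt - ybar = v + e" unfolding v_def e_def by simp
    hence "norm (yt - ybar) \<le> norm v + a" unfolding a_def using norm_triangle_ineq by metis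
    also have "\<dots> \<le> Cu * cPi * b + a" using vbound by simp
    also have "\<dots> \<le> (Cu * cPi + 1) * (a + b)" using a0 b0 Cupos cPi_pos by (simp add: algebra_simps)
    also have "\<dots> \<le> (Cu * cPi + 1) * (2 * (K0 * M))" using ab Cupos cPi_pos by (intro mult_left_mono) auto
    finally show ?thesis unfolding C'_def M_def t_def N1_def by (simp add: algebra_simps)
  qed
  show ?thesis
  proof (intro exI[of _ "3 * C'"] ballI allI impI)
    fix h ybar yrh ut yt
    assume h: "h \<in> {0<..h0}" and ybar: "ybar \<in> interp_space s Ysp (Dnorm d)"
      and yrh: "yrh \<in> Yh h \<and> (\<forall>z \<in> Yh h. inner yrh z + h powr (2 * \<alpha>) * d yrh z = inner ybar z)"
      and ut: "ut \<in> Uh h \<and> (\<forall>xh \<in> Xh h. blinfun_apply ut xh = blinfun_apply (Bop yrh) xh)"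
      and yt: "yt \<in> Ysp \<and> Bop yt = ut"
    have hpos: "h > 0" using h by simp
    have E: "norm (yt - ybar) \<le> C' * (norm y0 + h powr \<alpha> * Dn y1)" if "y1 \<in> Ysp" "ybar = y0 + y1" for y0 y1
      using est[OF h _ _ _ _ _ _ that] yrh ut yt by blast
    consider "s = 0" | "s = 1" | "0 < s \<and> s < 1" using s_range by linarith
    then show "norm (yt - ybar) \<le> 3 * C' * h powr (\<alpha> * s) * interp_norm s Ysp (Dnorm d) ybar"
    proof cases
      case 1
      have "norm (yt - ybar) \<le> C' * (norm ybar + h powr \<alpha> * Dn 0)" using E[OF Y0, of ybar] by simp
      also have "Dn 0 = 0" unfolding Dn_def Dnorm_def using d0[OF Y0] by simp
      finally have "norm (yt - ybar) \<le> C' * norm ybar" by simp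
      also have "\<dots> \<le> 3 * C' * norm ybar" using C'pos by simp
      finally show ?thesis using 1 hpos unfolding interp_norm_def by simp
    next
      case 2
      have ybY: "ybar \<in> Ysp" using ybar 2 unfolding interp_space_def by simp
      have "norm (yt - ybar) \<le> C' * (norm (0::'y) + h powr \<alpha> * Dn ybar)" using E[OF ybY, of 0] by simp
      also have "\<dots> \<le> 3 * C' * (h powr \<alpha> * Dn ybar)" using C'pos Dnn[OF ybY] hpos by simp
      finally show ?thesis using 2 unfolding interp_norm_def Dn_def by (simp add: mult.assoc)
    next
      case 3
      have fin: "interp_integral s Ysp (Dnorm d) ybar < \<infinity>" using ybar 3 unfolding interp_space_def by auto
      have Kb: "Kfun Ysp (Dnorm d) (h powr \<alpha>) ybar \<le> 3 * (h powr \<alpha>) powr s * sqrt (enn2real (interp_integral s Ysp (Dnorm d) ybar))"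
        using 3 hpos Y0 fin by (intro Kfun_bound) (auto simp: Dnorm_def intro: dnn)
      have "norm (yt - ybar) / C' \<le> Kfun Ysp (Dnorm d) (h powr \<alpha>) ybar"
        unfolding Kfun_def
      proof (rule cInf_greatest)
        show "{norm y0 + h powr \<alpha> * Dnorm d y1 | y0 y1. y1 \<in> Ysp \<and> ybar = y0 + y1} \<noteq> {}" using Y0 by force
        fix w assume "w \<in> {norm y0 + h powr \<alpha> * Dnorm d y1 | y0 y1. y1 \<in> Ysp \<and> ybar = y0 + y1}"
        then obtain y0 y1 where w: "w = norm y0 + h powr \<alpha> * Dnorm d y1" "y1 \<in> Ysp" "ybar = y0 + y1" by blast
        show "norm (yt - ybar) / C' \<le> w" using E[OF w(2,3)] C'pos unfolding w(1) Dn_def by (simp add: divide_le_eq mult.commute)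
      qed
      hence "norm (yt - ybar) \<le> C' * Kfun Ysp (Dnorm d) (h powr \<alpha>) ybar" using C'pos by (simp add: divide_le_eq mult.commute)
      also have "\<dots> \<le> C' * (3 * (h powr \<alpha>) powr s * sqrt (enn2real (interp_integral s Ysp (Dnorm d) ybar)))"
        using Kb C'pos by (intro mult_left_mono) auto
      also have "(h powr \<alpha>) powr s = h powr (\<alpha> * s)" by (simp add: powr_powr)
      finally show ?thesis using 3 unfolding interp_norm_def by (simp add: ac_simps)
    qed
  qed
qed

end
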